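(* Let $(\mathcal U,\mathcal F)$ be a strongly accessible set system, $S$ a nonempty maximal solution with canonical order $s_1,\dots,s_{|S|}$, and $1\le j\le |S|$. Then $T=\mathrm{complete}(S[j])$ is a maximal solution and $T\preceq S$.
   Context: A set system is a pair $(\mathcal U,\mathcal F)$ with $\mathcal U$ finite, $\mathcal F\subseteq 2^{\mathcal U}$, $\emptyset\in\mathcal F$; $S\in\mathcal F$ is maximal if there is no $Y\in\mathcal F$ with $S\subsetneq Y$. Strongly accessible: for all $X,Y\in\mathcal F$ with $X\subsetneq Y$ there is $z\in Y\setminus X$ with $X\cup\{z\}\in\mathcal F$. Elements of $\mathcal U$ are identified with distinct integers. For $X,A\subseteq\mathcal U$, $X^+_A=\{a\in A\setminus X: X\cup\{a\}\in\mathcal F\}$. $Z=\{x\in\mathcal U:\{x\}\in\mathcal F\}$, $\mathrm{source}(X)=\min(X\cap Z)$. For $X\in\mathcal F$ and $A\subseteq\mathcal U$, $\mathrm{complete}(X,A)$ is obtained by repeatedly replacing $X$ with $X\cup\{\min X^+_A\}$ while $X^+_A\neq\emptyset$, and then returning $X$; $\mathrm{complete}(X)=\mathrm{complete}(X,\mathcal U)$. The canonical order of a nonempty maximal solution $S$ is $s_1=\mathrm{source}(S)$ and $s_{i+1}=\min S[i]^+_S$ while this set is nonempty, where $S[i]=\{s_1,\dots,s_i\}$ (equivalently, the order in which $\mathrm{complete}(\{\mathrm{source}(S)\},S)$ adds elements). For maximal solutions $S\ne T$ with canonical orders $(s_i)$, $(t_i)$, let $i$ be the smallest index with $s_i\neq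 t_i$; then $S\prec T$ iff $s_i<t_i$, and $S\preceq T$ iff $S\prec T$ or $S=T$. *)

theory Defs
  imports Main "HOL-Library.While_Combinator"
begin

definition set_system :: "int set \<Rightarrow> int set set \<Rightarrow> bool" where
  "set_system U F \<longleftrightarrow> finite U \<and> F \<subseteq> Pow U \<and> {} \<in> F"

definition strongly_accessible :: "int set set \<Rightarrow> bool" where
  "strongly_accessible F \<longleftrightarrow>
     (\<forall>X\<in>F. \<forall>Y\<in>F. X \<subset> Y \<longrightarrow> (\<exists>z\<in>Y - X. insert z X \<in> F))"

definition maximal_sol :: "int set set \<Rightarrow> int set \<Rightarrow> bool" where
  "maximal_sol F S \<longleftrightarrow> S \<in> F \<and> \<not> (\<exists>Y\<in>F. S \<subset> Y)"

definition ext :: "int set set \<Rightarrow> int set \<Rightarrow> int set \<Rightarrow> int set" where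
  "ext F X A = {a \<in> A - X. insert a X \<in> F}"

definition singletons :: "int set \<Rightarrow> int set set \<Rightarrow> int set" where
  "singletons U F = {x \<in> U. {x} \<in> F}"

definition source :: "int set \<Rightarrow> int set set \<Rightarrow> int set \<Rightarrow> int" where
  "source U F X = Min (X \<inter> singletons U F)"

definition complete_in :: "int set set \<Rightarrow> int set \<Rightarrow> int set \<Rightarrow> int set" where
  "complete_in F A X =
     while (\<lambda>Y. ext F Y A \<noteq> {}) (\<lambda>Y. insert (Min (ext F Y A)) Y) X"

definition complete :: "int set \<Rightarrow> int set set \<Rightarrow> int set \<Rightarrow> int set" where
  "complete U F X = complete_in F U X"

definition canonical_order :: "int set \<Rightarrow> int set set \<Rightarrow> int set \<Rightarrow> int list" where
  "canonical_order U F S =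
     while (\<lambda>L. ext F (set L) S \<noteq> {}) (\<lambda>L. L @ [Min (ext F (set L) S)]) [source U F S]"

definition sol_less :: "int set \<Rightarrow> int set set \<Rightarrow> int set \<Rightarrow> int set \<Rightarrow> bool" where
  "sol_less U F S T \<longleftrightarrow> S \<noteq> T \<and>
     (let s = canonical_order U F S; t = canonical_order U F T in
      \<exists>i < length s. i < length t \<and> take i s = take i t \<and> s ! i < t ! i)"

definition sol_le :: "int set \<Rightarrow> int set set \<Rightarrow> int set \<Rightarrow> int set \<Rightarrow> bool" where
  "sol_le U F S T \<longleftrightarrow> sol_less U F S T \<or> S = T"

end

theory Submission
  imports Defs
begin

lemma complete_in_rule:
  assumes fin: "finite A" and init: "I X"
    and step: "\<And>Y. I Y \<Longrightarrow> ext F Y A \<noteq> {} \<Longrightarrow> I (insert (Min (ext F Y A)) Y)"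
  shows "I (complete_in F A X) \<and> ext F (complete_in F A X) A = {}"
  unfolding complete_in_def
proof (rule while_rule[where P = I and Q = "\<lambda>Y. I Y \<and> ext F Y A = {}" and r = "measure (\<lambda>Y. card (A - Y))"])
  show "I X" by fact
  show "\<And>Y. I Y \<Longrightarrow> ext F Y A \<noteq> {} \<Longrightarrow> I (insert (Min (ext F Y A)) Y)" by (rule step)
  show "\<And>Y. I Y \<Longrightarrow> \<not> ext F Y A \<noteq> {} \<Longrightarrow> I Y \<and> ext F Y A = {}" by simp
  show "wf (measure (\<lambda>Y. card (A - Y)))" by simp
  fix Y assume "I Y" "ext F Y A \<noteq> {}"
  have sub: "ext F Y A \<subseteq> A - Y" unfolding ext_def by auto
  hence fe: "finite (ext F Y A)" using fin finite_subset by blast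
  hence "Min (ext F Y A) \<in> ext F Y A" using \<open>ext F Y A \<noteq> {}\<close> by simp
  hence m: "Min (ext F Y A) \<in> A - Y" using sub by blast
  have "A - insert (Min (ext F Y A)) Y = (A - Y) - {Min (ext F Y A)}" by blast
  moreover have "card ((A - Y) - {Min (ext F Y A)}) < card (A - Y)"
    using m fin by (intro card_Diff1_less) auto
  ultimately have "card (A - insert (Min (ext F Y A)) Y) < card (A - Y)" by simp
  thus "(insert (Min (ext F Y A)) Y, Y) \<in> measure (\<lambda>Y. card (A - Y))" by simp
qed

definition co_inv :: "int set \<Rightarrow> int set set \<Rightarrow> int set \<Rightarrow> int list \<Rightarrow> bool" where
  "co_inv U F M L \<longleftrightarrow> L \<noteq> [] \<and> L!0 = source U F M \<and> distinct L \<and> set L \<subseteq> M \<and>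
     (\<forall>i. 0<i \<and> i<length L \<longrightarrow> ext F (set(take i L)) M \<noteq> {} \<and> L!i = Min(ext F (set(take i L)) M)) \<and>
     (\<forall>i\<le>length L. set (take i L) \<in> F)"

lemma co_props:
  assumes ss: "set_system U F" and sa: "strongly_accessible F"
    and mx: "maximal_sol F M" and ne: "M \<noteq> {}"
  shows "co_inv U F M (canonical_order U F M) \<and> set (canonical_order U F M) = M"
proof -
  have finU: "finite U" and FU: "F \<subseteq> Pow U" and e: "{} \<in> F" using ss unfolding set_system_def by auto
  have MF: "M \<in> F" using mx unfolding maximal_sol_def by auto
  hence MU: "M \<subseteq> U" using FU by auto
  hence finM: "finite M" using finU finite_subset by blast
  obtain z where z: "z \<in> M" "insert z {} \<in> F"
    using sa e MF ne unfolding strongly_accessible_def by blast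
  have zs: "z \<in> M \<inter> singletons U F" using z MU unfolding singletons_def by auto
  have finMS: "finite (M \<inter> singletons U F)" using finM by simp
  have src: "source U F M \<in> M \<inter> singletons U F"
    unfolding source_def using Min_in[OF finMS] zs by blast
  hence srcF: "{source U F M} \<in> F" unfolding singletons_def by auto
  have init: "co_inv U F M [source U F M]"
    unfolding co_inv_def using src srcF e
    by (auto simp: le_Suc_eq)
  show ?thesis unfolding canonical_order_def
  proof (rule while_rule[where P = "co_inv U F M" and Q = "\<lambda>L. co_inv U F M L \<and> set L = M" and r = "measure (\<lambda>L. card M - length L)"])
    show "co_inv U F M [source U F M]" by (rule init)
    show "wf (measure (\<lambda>L. card M - length L))" by simp
    fix L assume inv: "co_inv U F M L"
    {
      assume ne2: "ext F (set L) M \<noteq> {}"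
      define m where "m = Min (ext F (set L) M)"
      have fe: "finite (ext F (set L) M)" using finM unfolding ext_def by auto
      have mi: "m \<in> ext F (set L) M" unfolding m_def using Min_in[OF fe ne2] .
      hence mM: "m \<in> M" "m \<notin> set L" "insert m (set L) \<in> F" unfolding ext_def by auto
      have dl: "distinct L" "set L \<subseteq> M" using inv unfolding co_inv_def by auto
      have len: "length L < card M"
      proof -
        have "set L \<subset> M" using dl mM by blast
        hence "card (set L) < card M" using finM psubset_card_mono by blast
        thus ?thesis using distinct_card[OF dl(1)] by simp
      qed
      show "(L @ [m], L) \<in> measure (\<lambda>L. card M - length L)" using len by simp
      have A: "(L @ [m]) ! 0 = source U F M" using inv unfolding co_inv_def by (simp add: nth_append)
      have B: "distinct (L @ [m])" using dl mM by simp
      have C: "set (L @ [m]) \<subseteq> M" using dl mM by simp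
      have D: "\<forall>i. 0 < i \<and> i < length (L @ [m]) \<longrightarrow> ext F (set (take i (L @ [m]))) M \<noteq> {} \<and> (L @ [m]) ! i = Min (ext F (set (take i (L @ [m]))) M)"
      proof (intro allI impI)
          fix i
          assume i: "0 < i \<and> i < length (L @ [m])"
          show "ext F (set (take i (L @ [m]))) M \<noteq> {} \<and> (L @ [m]) ! i = Min (ext F (set (take i (L @ [m]))) M)"
          proof (cases "i < length L")
            case True
            thus ?thesis using inv i unfolding co_inv_def by (simp add: nth_append)
          next
            case False
            hence "i = length L" using i by simp
            thus ?thesis using ne2 m_def by simp
          qed
      qed
      have E: "\<forall>i\<le>length (L @ [m]). set (take i (L @ [m])) \<in> F"
      proof (intro allI impI)
          fix i
          assume i: "i \<le> length (L @ [m])"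
          show "set (take i (L @ [m])) \<in> F"
          proof (cases "i \<le> length L")
            case True
            thus ?thesis using inv unfolding co_inv_def by simp
          next
            case False
            hence "i = Suc (length L)" using i by simp
            thus ?thesis using mM by simp
          qed
      qed
      show "co_inv U F M (L @ [m])" unfolding co_inv_def using A B C D E by simp
    }
    {
      assume nb: "\<not> ext F (set L) M \<noteq> {}"
      have sub: "set L \<subseteq> M" and LF: "set L \<in> F" using inv unfolding co_inv_def by auto
      have "set L = M"
      proof (rule ccontr)
        assume "set L \<noteq> M"
        hence "set L \<subset> M" using sub by blast
        then obtain w where "w \<in> M - set L" "insert w (set L) \<in> F"
          using sa LF MF unfolding strongly_accessible_def by blast
        hence "w \<in> ext F (set L) M" unfolding ext_def by auto
        thus False using nb by blast
      qed
      thus "co_inv U F M L \<and> set L = M" using inv by simp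
    }
  qed
qed

lemma first_diff:
  "take (length t) s \<noteq> t \<Longrightarrow> take (length s) t \<noteq> s \<Longrightarrow>
   \<exists>i<length s. i<length t \<and> take i s = take i t \<and> s!i \<noteq> t!i"
proof (induction s arbitrary: t)
  case Nil
  then show ?case by simp
next
  case (Cons a s)
  show ?case
  proof (cases t)
    case Nil
    then show ?thesis using Cons by simp
  next
    case (Cons b t')
    show ?thesis
    proof (cases "a = b")
      case False
      then show ?thesis using Cons by (intro exI[of _ 0]) simp
    next
      case True
      then obtain i where "i<length s" "i<length t'" "take i s = take i t'" "s!i \<noteq> t'!i"
        using Cons.IH[of t'] Cons.prems \<open>t = b # t'\<close> by auto
      then show ?thesis using \<open>t = b # t'\<close> True by (intro exI[of _ "Suc i"]) simp
    qed
  qed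
qed

lemma nth_notin_take: "distinct xs \<Longrightarrow> i < length xs \<Longrightarrow> xs!i \<notin> set (take i xs)"
  by (metis append_take_drop_id Cons_nth_drop_Suc distinct_append list.set_intros(1) disjoint_iff)

theorem mainTheorem3:
  fixes U :: "int set" and F :: "int set set" and S :: "int set" and j :: nat
  assumes "set_system U F"
    and "strongly_accessible F"
    and "maximal_sol F S"
    and "S \<noteq> {}"
    and "1 \<le> j" and "j \<le> card S"
  shows "maximal_sol F (complete U F (set (take j (canonical_order U F S))))
       \<and> sol_le U F (complete U F (set (take j (canonical_order U F S)))) S"
proof -
  note ss = assms(1) and sa = assms(2) and mx = assms(3)
  have finU: "finite U" and FU: "F \<subseteq> Pow U" using ss unfolding set_system_def by auto
  have SF: "S \<in> F" using mx unfolding maximal_sol_def by auto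
  hence SU: "S \<subseteq> U" using FU by auto
  define cs where "cs = canonical_order U F S"
  have csp: "co_inv U F S cs" "set cs = S" using co_props[OF ss sa mx assms(4)] cs_def by auto
  have lcs: "length cs = card S" using csp distinct_card unfolding co_inv_def by fastforce
  define Pj where "Pj = set (take j cs)"
  have PjF: "Pj \<in> F" using csp(1) assms(6) lcs unfolding co_inv_def Pj_def by auto
  define T where "T = complete U F Pj"
  have stp: "\<And>Y. Y \<in> F \<and> Pj \<subseteq> Y \<Longrightarrow> ext F Y U \<noteq> {} \<Longrightarrow>
      insert (Min (ext F Y U)) Y \<in> F \<and> Pj \<subseteq> insert (Min (ext F Y U)) Y"
  proof -
    fix Y assume a: "Y \<in> F \<and> Pj \<subseteq> Y" "ext F Y U \<noteq> {}"
    have "finite (ext F Y U)" using finite_subset[OF _ finU, of "ext F Y U"] unfolding ext_def by auto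
    hence "Min (ext F Y U) \<in> ext F Y U" using a(2) by simp
    thus "insert (Min (ext F Y U)) Y \<in> F \<and> Pj \<subseteq> insert (Min (ext F Y U)) Y"
      using a unfolding ext_def by auto
  qed
  have Tp: "T \<in> F \<and> Pj \<subseteq> T" and Text: "ext F T U = {}"
    using complete_in_rule[OF finU, of "\<lambda>Y. Y \<in> F \<and> Pj \<subseteq> Y" Pj F, OF _ stp] PjF
    unfolding T_def complete_def by auto
  have TU: "T \<subseteq> U" using Tp FU by auto
  have cs0: "cs ! 0 \<in> Pj"
  proof -
    have "cs \<noteq> []" using csp(1) unfolding co_inv_def by simp
    hence l: "0 < length (take j cs)" using assms(5) by simp
    have "take j cs ! 0 = cs ! 0" using assms(5) by simp
    thus ?thesis using nth_mem[OF l] unfolding Pj_def by simp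
  qed
  have Tmax: "maximal_sol F T"
    unfolding maximal_sol_def
  proof (intro conjI notI)
    show "T \<in> F" using Tp by simp
    assume "\<exists>Y\<in>F. T \<subset> Y"
    then obtain Y where Y: "Y \<in> F" "T \<subset> Y" by blast
    then obtain w where "w \<in> Y - T" "insert w T \<in> F"
      using sa Tp unfolding strongly_accessible_def by blast
    moreover have "w \<in> U" using Y FU \<open>w \<in> Y - T\<close> by auto
    ultimately have "w \<in> ext F T U" unfolding ext_def by auto
    thus False using Text by blast
  qed
  have Tne: "T \<noteq> {}" using cs0 Tp by blast
  define ct where "ct = canonical_order U F T"
  have ctp: "co_inv U F T ct" "set ct = T" using co_props[OF ss sa Tmax Tne] ct_def by auto
  have le: "sol_le U F T S"
  proof (cases "T = S")
    case True thus ?thesis unfolding sol_le_def by simp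
  next
    case False
    have TmaxF: "\<not> (\<exists>Y\<in>F. T \<subset> Y)" using Tmax unfolding maximal_sol_def by auto
    have SmaxF: "\<not> (\<exists>Y\<in>F. S \<subset> Y)" using mx unfolding maximal_sol_def by auto
    have np1: "take (length cs) ct \<noteq> cs"
    proof
      assume "take (length cs) ct = cs"
      hence "S \<subseteq> T" using csp(2) ctp(2) set_take_subset[of "length cs" ct] by simp
      thus False using False SmaxF Tp by blast
    qed
    have np2: "take (length ct) cs \<noteq> ct"
    proof
      assume "take (length ct) cs = ct"
      hence "T \<subseteq> S" using csp(2) ctp(2) set_take_subset[of "length ct" cs] by simp
      thus False using False TmaxF SF by blast
    qed
    obtain i where i: "i < length ct" "i < length cs" "take i ct = take i cs" "ct!i \<noteq> cs!i"
      using first_diff[OF np1 np2] by blast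
    have "ct ! i \<le> cs ! i"
    proof (cases "i = 0")
      case True
      have "ct ! 0 = source U F T" using ctp unfolding co_inv_def by simp
      moreover have "cs ! 0 = source U F S" using csp unfolding co_inv_def by simp
      moreover have "source U F S \<in> S \<inter> singletons U F"
      proof -
        have "cs ! 0 \<in> S" using csp(2) i(2) True by auto
        moreover have "{cs ! 0} \<in> F"
        proof -
          have "1 \<le> length cs" using i(2) True by linarith
          hence "set (take 1 cs) \<in> F" using csp(1) unfolding co_inv_def by blast
          moreover have "take 1 cs = [cs!0]" using i(2) True by (cases cs) auto
          ultimately show ?thesis by simp
        qed
        ultimately show ?thesis using \<open>cs ! 0 = source U F S\<close> SU unfolding singletons_def by auto
      qed
      moreover have "finite (T \<inter> singletons U F)" using TU finU finite_subset by blast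
      moreover have "source U F S \<in> T" using cs0 Tp \<open>cs ! 0 = source U F S\<close> by auto
      ultimately have "ct ! 0 \<le> cs ! 0" unfolding source_def
        by (simp add: Min_le)
      thus ?thesis using True by simp
    next
      case False
      define P where "P = set (take i cs)"
      have ctI: "ct ! i = Min (ext F P T)" and "ext F P T \<noteq> {}"
        using ctp(1) False i unfolding co_inv_def P_def by auto
      have csI: "ext F P S \<noteq> {}" "cs ! i = Min (ext F P S)"
        using csp(1) False i unfolding co_inv_def P_def by auto
      have csIn: "cs ! i \<in> ext F P S"
        using csI Min_in[of "ext F P S"] finite_subset[OF _ finU, of "ext F P S"] SU
        unfolding ext_def by auto
      have finPT: "finite (ext F P T)" using finite_subset[OF _ finU, of "ext F P T"] TU unfolding ext_def by auto
      have "\<exists>x\<in>ext F P T. x \<le> cs ! i"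
      proof (cases "i < j")
        case True
        have l: "i < length (take j cs)" using True i(2) by simp
        have "take j cs ! i = cs ! i" using True by simp
        hence "cs ! i \<in> Pj" unfolding Pj_def using nth_mem[OF l] by simp
        hence "cs ! i \<in> ext F P T" using csIn Tp unfolding ext_def by auto
        thus ?thesis by blast
      next
        case ge: False
        define I where "I = (\<lambda>Y. (\<exists>k. j \<le> k \<and> k \<le> i \<and> Y = set(take k cs)) \<or>
           (\<exists>k c. j \<le> k \<and> k < i \<and> c \<in> Y \<and> c \<notin> set(take k cs) \<and> insert c (set(take k cs)) \<in> F \<and> c < cs!k) \<or>
           (\<exists>c. c \<in> Y \<and> c \<notin> P \<and> insert c P \<in> F \<and> c \<le> cs!i))"
        have "I (complete_in F U Pj)"
        proof (rule conjunct1[OF complete_in_rule[OF finU]])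
          show "I Pj" unfolding I_def Pj_def using ge by auto
          fix Y assume IY: "I Y" and ne: "ext F Y U \<noteq> {}"
          define c where "c = Min (ext F Y U)"
          have finY: "finite (ext F Y U)" using finite_subset[OF _ finU, of "ext F Y U"] unfolding ext_def by auto
          have cin: "c \<in> ext F Y U" unfolding c_def using Min_in[OF finY ne] .
          from IY[unfolded I_def] have "I (insert c Y)"
          proof (elim disjE exE conjE)
            fix k assume k: "j \<le> k" "k \<le> i" "Y = set (take k cs)"
            show ?thesis
            proof (cases "k = i")
              case True
              hence YP: "Y = P" using k P_def by simp
              have "cs ! i \<in> ext F Y U" using csIn YP SU unfolding ext_def by auto
              hence "c \<le> cs ! i" unfolding c_def using finY by simp
              thus ?thesis using cin YP unfolding I_def ext_def by auto
            next
              case False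
              hence ki: "k < i" using k by simp
              have kpos: "0 < k" using k assms(5) by simp
              have Ck: "ext F (set (take k cs)) S \<noteq> {}" "cs ! k = Min (ext F (set (take k cs)) S)"
                using csp(1) kpos ki i(2) unfolding co_inv_def by auto
              have "cs ! k \<in> ext F (set (take k cs)) S"
                using Ck Min_in[of "ext F (set (take k cs)) S"] finite_subset[OF _ finU, of "ext F (set (take k cs)) S"] SU
                unfolding ext_def by auto
              hence "cs ! k \<in> ext F Y U" using k SU unfolding ext_def by auto
              hence cle: "c \<le> cs ! k" unfolding c_def using finY by simp
              show ?thesis
              proof (cases "c = cs ! k")
                case True
                have "insert c Y = set (take (Suc k) cs)"
                  using True k ki i(2) by (simp add: take_Suc_conv_app_nth)
                thus ?thesis using k ki unfolding I_def by (intro disjI1 exI[of _ "Suc k"]) simp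
              next
                case False
                hence "c < cs ! k" using cle by simp
                thus ?thesis using cin k ki unfolding I_def ext_def
                  by (intro disjI2 disjI1 exI[of _ k] exI[of _ c]) auto
              qed
            qed
          next
            fix k c' assume "j \<le> k" "k < i" "c' \<in> Y" "c' \<notin> set (take k cs)"
              "insert c' (set (take k cs)) \<in> F" "c' < cs ! k"
            thus ?thesis unfolding I_def by (intro disjI2 disjI1 exI[of _ k] exI[of _ c']) auto
          next
            fix c' assume "c' \<in> Y" "c' \<notin> P" "insert c' P \<in> F" "c' \<le> cs ! i"
            thus ?thesis unfolding I_def by (intro disjI2 disjI2 exI[of _ c']) auto
          qed
          thus "I (insert (Min (ext F Y U)) Y)" using c_def by simp
        qed
        hence IT: "I T" unfolding T_def complete_def .
        have dct: "distinct ct" using ctp unfolding co_inv_def by simp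
        have Pct: "P = set (take i ct)" using i(3) P_def by simp
        have ctiT: "ct ! i \<in> T" using ctp(2) i(1) by auto
        have ctiP: "ct ! i \<notin> P" using nth_notin_take[OF dct i(1)] Pct by simp
        from IT show ?thesis unfolding I_def
        proof (elim disjE exE conjE)
          fix k assume k: "j \<le> k" "k \<le> i" "T = set (take k cs)"
          have "set (take k cs) \<subseteq> P" unfolding P_def using k(2)
            by (simp add: set_take_subset_set_take)
          thus ?thesis using k ctiT ctiP by blast
        next
          fix k c' assume k: "j \<le> k" "k < i" "c' \<in> T" "c' \<notin> set (take k cs)"
              "insert c' (set (take k cs)) \<in> F" "c' < cs ! k"
          have kpos: "0 < k" using k assms(5) by simp
          have tk1: "take k cs = take k (take i cs)" using k(2) by (simp add: min_def)
          have tk2: "take k ct = take k (take i ct)" using k(2) by (simp add: min_def)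
          have tk: "take k cs = take k ct" using tk1 tk2 i(3) by simp
          have nk1: "cs ! k = take i cs ! k" using k(2) by simp
          have nk2: "ct ! k = take i ct ! k" using k(2) by simp
          have nk: "cs ! k = ct ! k" using nk1 nk2 i(3) by simp
          have Ct: "ct ! k = Min (ext F (set (take k ct)) T)"
            using ctp(1) kpos k(2) i(1) unfolding co_inv_def by auto
          have "c' \<in> ext F (set (take k ct)) T" using k tk unfolding ext_def by auto
          moreover have "finite (ext F (set (take k ct)) T)"
            using finite_subset[OF _ finU, of "ext F (set (take k ct)) T"] TU unfolding ext_def by auto
          ultimately have "ct ! k \<le> c'" using Ct by simp
          thus ?thesis using k nk by simp
        next
          fix c' assume "c' \<in> T" "c' \<notin> P" "insert c' P \<in> F" "c' \<le> cs ! i"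
          thus ?thesis unfolding ext_def by auto
        qed
      qed
      then obtain x where "x \<in> ext F P T" "x \<le> cs ! i" by blast
      thus ?thesis using ctI finPT by (metis Min_le order_trans)
    qed
    hence "ct ! i < cs ! i" using i(4) by simp
    thus ?thesis unfolding sol_le_def sol_less_def Let_def ct_def[symmetric] cs_def[symmetric]
      using False i by blast
  qed
  show ?thesis using Tmax le unfolding T_def Pj_def cs_def by simp
qed

end
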